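(* Let $X$ be an $n\times p$ random matrix following the Bernoulli-Subgaussian model with parameter $\theta$, where $2/n\le\theta\le 1$, and let $\mu=\mathbb{E}|R_{11}|$. For any $1\le j\le p$, let $Z=(\chi_{1j}R_{1j},\dots,\chi_{nj}R_{nj})$ be the $j$-th column of $X$. Then for all $v\in\mathbb{R}^n$, $$\mathbb{E}|v^TZ|\ge\frac{\mu}{8}\sqrt{\frac{\theta}{n}}\,\|v\|_1.$$
   Context: Bernoulli-Subgaussian model with parameter $\theta$: the entries of $X$ are $X_{kl}=\chi_{kl}R_{kl}$, where all the variables $\chi_{kl},R_{kl}$ are independent, $\mathbb{P}(\chi_{kl}=1)=1-\mathbb{P}(\chi_{kl}=0)=\theta$, and the $R_{kl}$ are i.i.d. with $\mathbb{E}R_{kl}=0$, $\mu:=\mathbb{E}|R_{kl}|\ge1/10$ and $\mathbb{P}(|R_{kl}|\ge t)\le 2e^{-t^2/2}$ for all $t>0$. $\|v\|_1=\sum_l|v(l)|$. *)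

theory Defs
  imports "HOL-Probability.Probability"
begin

text \<open>Bernoulli-Subgaussian model with parameter theta for an n x p random matrix
  X with entries X k l = chi k l * R k l (indices k < n, l < p, 0-based),
  on the probability space M.\<close>

definition bernoulli_subgaussian ::
  "'a measure \<Rightarrow> nat \<Rightarrow> nat \<Rightarrow> real \<Rightarrow> (nat \<Rightarrow> nat \<Rightarrow> 'a \<Rightarrow> real)
     \<Rightarrow> (nat \<Rightarrow> nat \<Rightarrow> 'a \<Rightarrow> real) \<Rightarrow> bool" where
  "bernoulli_subgaussian M n p \<theta> chi R \<longleftrightarrow>
     prob_space M \<and>
     \<comment> \<open>all the variables chi k l, R k l are (jointly) independent\<close>
     prob_space.indep_vars M (\<lambda>_. borel)
        (\<lambda>(b, k, l). if b then chi k l else R k l) (UNIV \<times> {..<n} \<times> {..<p}) \<and>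
     \<comment> \<open>chi k l is Bernoulli(theta)\<close>
     (\<forall>k<n. \<forall>l<p. (AE \<omega> in M. chi k l \<omega> \<in> {0, 1}) \<and>
                  measure M {\<omega> \<in> space M. chi k l \<omega> = 1} = \<theta>) \<and>
     \<comment> \<open>R k l identically distributed\<close>
     (\<forall>k<n. \<forall>l<p. \<forall>k'<n. \<forall>l'<p. distr M borel (R k l) = distr M borel (R k' l')) \<and>
     \<comment> \<open>mean zero, E|R| >= 1/10, subgaussian tail\<close>
     (\<forall>k<n. \<forall>l<p. integrable M (R k l) \<and> integral\<^sup>L M (R k l) = 0 \<and>
        integral\<^sup>L M (\<lambda>\<omega>. \<bar>R k l \<omega>\<bar>) \<ge> 1/10 \<and>
        (\<forall>t>0. measure M {\<omega> \<in> space M. \<bar>R k l \<omega>\<bar> \<ge> t} \<le> 2 * exp (- t\<^sup>2 / 2)))"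

end

theory Submission
  imports Defs
begin

lemma (in prob_space) abs_indep_mono:
  fixes X Y :: "'a \<Rightarrow> real"
  assumes ind: "indep_var borel X borel Y" and iX: "integrable M X" and iY: "integrable M Y"
    and m: "expectation Y = 0"
  shows "expectation (\<lambda>\<omega>. \<bar>X \<omega>\<bar>) \<le> expectation (\<lambda>\<omega>. \<bar>X \<omega> + Y \<omega>\<bar>)"
proof -
  have rX[measurable]: "X \<in> borel_measurable M" and rY[measurable]: "Y \<in> borel_measurable M"
    using iX iY by auto
  interpret PX: prob_space "distr M borel X" by (rule prob_space_distr) simp
  interpret PY: prob_space "distr M borel Y" by (rule prob_space_distr) simp
  interpret PP: pair_sigma_finite "distr M borel X" "distr M borel Y" ..
  have eq: "distr M borel X \<Otimes>\<^sub>M distr M borel Y = distr M (borel \<Otimes>\<^sub>M borel) (\<lambda>x. (X x, Y x))"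
    using ind indep_var_distribution_eq by blast
  have iXY: "integrable M (\<lambda>\<omega>. \<bar>X \<omega> + Y \<omega>\<bar>)" using iX iY by auto
  have int2: "integrable (distr M borel X \<Otimes>\<^sub>M distr M borel Y) (\<lambda>z. \<bar>fst z + snd z\<bar>)"
    unfolding eq by (subst integrable_distr_eq) (auto simp: iXY)
  have "expectation (\<lambda>\<omega>. \<bar>X \<omega> + Y \<omega>\<bar>) = integral\<^sup>L (distr M (borel \<Otimes>\<^sub>M borel) (\<lambda>x. (X x, Y x))) (\<lambda>z. \<bar>fst z + snd z\<bar>)"
    by (subst integral_distr) auto
  also have "\<dots> = integral\<^sup>L (distr M borel X \<Otimes>\<^sub>M distr M borel Y) (\<lambda>z. \<bar>fst z + snd z\<bar>)"
    unfolding eq ..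
  also have "\<dots> = (\<integral>x. (\<integral>y. \<bar>x + y\<bar> \<partial>distr M borel Y) \<partial>distr M borel X)"
    using PP.integral_fst'[OF int2] by simp
  finally have e1: "expectation (\<lambda>\<omega>. \<bar>X \<omega> + Y \<omega>\<bar>) = (\<integral>x. (\<integral>y. \<bar>x + y\<bar> \<partial>distr M borel Y) \<partial>distr M borel X)" .
  have iYd: "integrable (distr M borel Y) (\<lambda>y. y)" by (subst integrable_distr_eq) (auto simp: iY)
  have mY: "(\<integral>y. y \<partial>distr M borel Y) = 0" using m by (subst integral_distr) auto
  have inner: "\<bar>x\<bar> \<le> (\<integral>y. \<bar>x + y\<bar> \<partial>distr M borel Y)" for x
  proof -
    have "(\<integral>y. x + y \<partial>distr M borel Y) = x + (\<integral>y. y \<partial>distr M borel Y)"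
      using iYd by (subst Bochner_Integration.integral_add) (auto simp: PY.prob_space[simplified])
    then have "(\<integral>y. x + y \<partial>distr M borel Y) = x" using mY by simp
    moreover have "\<bar>\<integral>y. x + y \<partial>distr M borel Y\<bar> \<le> (\<integral>y. \<bar>x + y\<bar> \<partial>distr M borel Y)"
      by (rule integral_abs_bound)
    ultimately show ?thesis by simp
  qed
  have iXd: "integrable (distr M borel X) (\<lambda>x. \<bar>x\<bar>)" by (subst integrable_distr_eq) (auto simp: iX)
  have "expectation (\<lambda>\<omega>. \<bar>X \<omega>\<bar>) = (\<integral>x. \<bar>x\<bar> \<partial>distr M borel X)" by (subst integral_distr) auto
  also have "\<dots> \<le> (\<integral>x. (\<integral>y. \<bar>x + y\<bar> \<partial>distr M borel Y) \<partial>distr M borel X)"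
    apply (rule integral_mono[OF iXd])
    using PP.integrable_fst'[OF int2] apply simp
    by (rule inner)
  finally show ?thesis using e1 by simp
qed

definition sgs :: "(nat \<Rightarrow> real) \<Rightarrow> nat \<Rightarrow> nat set \<Rightarrow> real" where
  "sgs a n A = (\<Sum>k<n. if k \<in> A then a k else - a k)"

lemma sgs_Suc1: "A \<subseteq> {..<n} \<Longrightarrow> sgs a (Suc n) A = sgs a n A - a n"
  unfolding sgs_def by auto

lemma sgs_Suc2: "A \<subseteq> {..<n} \<Longrightarrow> sgs a (Suc n) (insert n A) = sgs a n A + a n"
proof -
  assume A: "A \<subseteq> {..<n}"
  have "(\<Sum>k<n. if k \<in> insert n A then a k else - a k) = (\<Sum>k<n. if k \<in> A then a k else - a k)"
    by (rule sum.cong) auto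
  then show ?thesis unfolding sgs_def by simp
qed

lemma sum_Pow_Suc:
  "(\<Sum>A\<in>Pow {..<Suc n}. f (sgs a (Suc n) A)) =
   (\<Sum>A\<in>Pow {..<n}. f (sgs a n A - a n) + f (sgs a n A + a n))"
proof -
  have P: "Pow {..<Suc n} = Pow {..<n} \<union> insert n ` Pow {..<n}"
    by (simp add: lessThan_Suc Pow_insert)
  have disj: "Pow {..<n} \<inter> insert n ` Pow {..<n} = {}" by auto
  have inj: "inj_on (insert n) (Pow {..<n})"
    by (rule inj_onI) (auto simp: insert_ident subset_eq)
  have "(\<Sum>A\<in>Pow {..<Suc n}. f (sgs a (Suc n) A)) =
     (\<Sum>A\<in>Pow {..<n}. f (sgs a (Suc n) A)) + (\<Sum>A\<in>insert n ` Pow {..<n}. f (sgs a (Suc n) A))"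
    unfolding P by (rule sum.union_disjoint) (use disj in auto)
  also have "(\<Sum>A\<in>insert n ` Pow {..<n}. f (sgs a (Suc n) A)) = (\<Sum>A\<in>Pow {..<n}. f (sgs a (Suc n) (insert n A)))"
    by (rule sum.reindex[OF inj, unfolded comp_def])
  also have "\<dots> = (\<Sum>A\<in>Pow {..<n}. f (sgs a n A + a n))"
    by (rule sum.cong) (auto simp: sgs_Suc2)
  also have "(\<Sum>A\<in>Pow {..<n}. f (sgs a (Suc n) A)) = (\<Sum>A\<in>Pow {..<n}. f (sgs a n A - a n))"
    by (rule sum.cong) (auto simp: sgs_Suc1)
  finally show ?thesis by (simp add: sum.distrib)
qed

lemma mom2: "(\<Sum>A\<in>Pow {..<n}. (sgs a n A)^2) = 2^n * (\<Sum>k<n. (a k)^2)"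
proof (induction n)
  case 0 then show ?case by (simp add: sgs_def)
next
  case (Suc n)
  have "(\<Sum>A\<in>Pow {..<Suc n}. (sgs a (Suc n) A)^2) = (\<Sum>A\<in>Pow {..<n}. 2 * (sgs a n A)^2 + 2 * (a n)^2)"
    by (subst sum_Pow_Suc) (simp add: power2_eq_square algebra_simps)
  also have "\<dots> = 2 * (\<Sum>A\<in>Pow {..<n}. (sgs a n A)^2) + 2 * 2^n * (a n)^2"
    by (simp add: sum.distrib sum_distrib_left card_Pow)
  finally show ?case using Suc by (simp add: algebra_simps)
qed

lemma mom4: "(\<Sum>A\<in>Pow {..<n}. (sgs a n A)^4) \<le> 3 * 2^n * (\<Sum>k<n. (a k)^2)^2"
proof (induction n)
  case 0 then show ?case by (simp add: sgs_def)
next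
  case (Suc n)
  let ?Q = "\<Sum>k<n. (a k)^2"
  have e: "(s - b)^4 + (s + b)^4 = 2 * s^4 + 12 * b^2 * s^2 + 2 * b^4" for s b :: real
    by (simp add: power_numeral_reduce power2_eq_square algebra_simps)
  have "(\<Sum>A\<in>Pow {..<Suc n}. (sgs a (Suc n) A)^4) = (\<Sum>A\<in>Pow {..<n}. 2 * (sgs a n A)^4 + 12 * (a n)^2 * (sgs a n A)^2 + 2 * (a n)^4)"
    by (subst sum_Pow_Suc) (simp add: e)
  also have "\<dots> = 2 * (\<Sum>A\<in>Pow {..<n}. (sgs a n A)^4) + 12 * (a n)^2 * (\<Sum>A\<in>Pow {..<n}. (sgs a n A)^2) + 2 * 2^n * (a n)^4"
    by (simp add: sum.distrib sum_distrib_left card_Pow)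
  also have "\<dots> \<le> 2 * (3 * 2^n * ?Q^2) + 12 * (a n)^2 * (2^n * ?Q) + 2 * 2^n * (a n)^4"
    using Suc by (simp add: mom2)
  also have "\<dots> \<le> 3 * 2^(Suc n) * (?Q + (a n)^2)^2"
  proof -
    have "0 \<le> (a n)^4 * 2^n" by simp
    then show ?thesis by (simp add: power2_eq_square power_numeral_reduce algebra_simps)
  qed
  finally show ?case by simp
qed

lemma quartic_lb:
  fixes x t :: real assumes t: "t > 0"
  shows "x^2 / t - (4/27) * x^4 / t^3 \<le> \<bar>x\<bar>"
proof -
  let ?y = "\<bar>x\<bar>"
  have "0 \<le> ?y * (2 * ?y - 3 * t)^2 * (?y + 3 * t)" using t by simp
  also have "?y * (2 * ?y - 3 * t)^2 * (?y + 3 * t) = 27 * t^3 * ?y - 27 * t^2 * ?y^2 + 4 * ?y^4"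
    by (simp add: power2_eq_square power_numeral_reduce algebra_simps)
  finally have h: "27 * t^2 * x^2 - 4 * x^4 \<le> 27 * t^3 * \<bar>x\<bar>"
    by (simp add: power2_abs power4_eq_xxxx[symmetric] power_abs)
  have "x^2 / t - (4/27) * x^4 / t^3 = (27 * t^2 * x^2 - 4 * x^4) / (27 * t^3)"
    using t by (simp add: field_simps power_numeral_reduce)
  also have "\<dots> \<le> (27 * t^3 * \<bar>x\<bar>) / (27 * t^3)"
    using h t by (intro divide_right_mono) auto
  also have "\<dots> = \<bar>x\<bar>" using t by simp
  finally show ?thesis .
qed

lemma khintchine:
  "2^n * sqrt (\<Sum>k<n. (a k)^2) / sqrt 3 \<le> (\<Sum>A\<in>Pow {..<n}. \<bar>sgs a n A\<bar>)"
proof (cases "(\<Sum>k<n. (a k)^2) = 0")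
  case True then show ?thesis by (simp add: sum_nonneg)
next
  case False
  define Q where "Q = (\<Sum>k<n. (a k)^2)"
  have Q: "Q > 0" using False unfolding Q_def by (simp add: less_le sum_nonneg)
  define t where "t = sqrt (4 * Q / 3)"
  have t: "t > 0" using Q by (simp add: t_def)
  have t2: "t^2 = 4 * Q / 3" using Q by (simp add: t_def)
  have "(\<Sum>A\<in>Pow {..<n}. (sgs a n A)^2 / t - (4/27) * (sgs a n A)^4 / t^3) \<le> (\<Sum>A\<in>Pow {..<n}. \<bar>sgs a n A\<bar>)"
    by (rule sum_mono) (rule quartic_lb[OF t])
  moreover have "(\<Sum>A\<in>Pow {..<n}. (sgs a n A)^2 / t - (4/27) * (sgs a n A)^4 / t^3)
      = 2^n * Q / t - (4/27) * (\<Sum>A\<in>Pow {..<n}. (sgs a n A)^4) / t^3"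
    by (simp add: sum_subtractf sum_divide_distrib[symmetric] sum_distrib_left mom2[of a n, folded Q_def])
  moreover have "(4/27) * (\<Sum>A\<in>Pow {..<n}. (sgs a n A)^4) / t^3 \<le> (4/27) * (3 * 2^n * Q^2) / t^3"
    using mom4[of a n] t unfolding Q_def by (intro divide_right_mono) auto
  moreover have "2^n * Q / t - (4/27) * (3 * 2^n * Q^2) / t^3 = 2^n * sqrt Q / sqrt 3"
  proof -
    have t3: "t^3 = t * (4 * Q / 3)" using t2 by (simp add: power_numeral_reduce power2_eq_square)
    have "2^n * Q / t - (4/27) * (3 * 2^n * Q^2) / t^3 = 2^n * Q / t * (2/3)"
      using t Q unfolding t3 by (simp add: field_simps power2_eq_square)
    also have "\<dots> = 2^n * sqrt Q / sqrt 3"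
    proof -
      have tt: "t = 2 * sqrt Q / sqrt 3" unfolding t_def using Q by (simp add: real_sqrt_divide real_sqrt_mult)
      have QQ: "Q = sqrt Q * sqrt Q" using Q by simp
      have aux: "(c::real) * q / (2 * s / r) * (2/3) = c * s / r" if "s > 0" "r > 0" "r * r = 3" "q = s * s" for c s r q
      proof -
        have "c * q / (2 * s / r) * (2/3) = c * s * (r * r) / (3 * r)" using that by (simp add: field_simps)
        also have "\<dots> = c * s / r" using that by (simp add: field_simps)
        finally show ?thesis .
      qed
      show ?thesis unfolding tt by (rule aux[where s="sqrt Q" and r="sqrt 3"]) (use Q QQ in auto)
    qed
    finally show ?thesis .
  qed
  ultimately show ?thesis unfolding Q_def[symmetric] by linarith
qed

lemma cs_chi:
  fixes b c :: "nat \<Rightarrow> real"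
  assumes c01: "\<forall>k<n. c k \<in> {0,1}"
  shows "(\<Sum>k<n. \<bar>b k\<bar> * c k / sqrt (1 + (\<Sum>l\<in>{..<n}-{k}. c l))) \<le> sqrt (\<Sum>k<n. (b k * c k)^2)"
proof -
  define K where "K = {k. k < n \<and> c k = 1}"
  have Kfin: "finite K" and Ksub: "K \<subseteq> {..<n}" by (auto simp: K_def)
  have sumc: "(\<Sum>l<n. c l) = real (card K)"
  proof -
    have "(\<Sum>l<n. c l) = (\<Sum>l<n. if l \<in> K then 1 else 0)"
      by (rule sum.cong) (use c01 in \<open>auto simp: K_def\<close>)
    also have "\<dots> = real (card K)" using Ksub by (simp add: sum.If_cases Int_absorb1)
    finally show ?thesis .
  qed
  have den: "1 + (\<Sum>l\<in>{..<n}-{k}. c l) = real (card K)" if "k \<in> K" for k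
  proof -
    have "(\<Sum>l<n. c l) = c k + (\<Sum>l\<in>{..<n}-{k}. c l)"
      using that Ksub by (subst sum.remove[of _ k]) auto
    then show ?thesis using that sumc by (simp add: K_def)
  qed
  have L: "(\<Sum>k<n. \<bar>b k\<bar> * c k / sqrt (1 + (\<Sum>l\<in>{..<n}-{k}. c l))) = (\<Sum>k\<in>K. \<bar>b k\<bar>) / sqrt (card K)"
  proof -
    have "(\<Sum>k<n. \<bar>b k\<bar> * c k / sqrt (1 + (\<Sum>l\<in>{..<n}-{k}. c l))) = (\<Sum>k<n. if k \<in> K then \<bar>b k\<bar> / sqrt (card K) else 0)"
      by (rule sum.cong) (use c01 den in \<open>auto simp: K_def\<close>)
    also have "\<dots> = (\<Sum>k\<in>K. \<bar>b k\<bar> / sqrt (card K))" using Ksub by (simp add: sum.If_cases Int_absorb1)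
    finally show ?thesis by (simp add: sum_divide_distrib)
  qed
  have R: "(\<Sum>k<n. (b k * c k)^2) = (\<Sum>k\<in>K. (b k)^2)"
  proof -
    have "(\<Sum>k<n. (b k * c k)^2) = (\<Sum>k<n. if k \<in> K then (b k)^2 else 0)"
      by (rule sum.cong) (use c01 in \<open>auto simp: K_def\<close>)
    also have "\<dots> = (\<Sum>k\<in>K. (b k)^2)" using Ksub by (simp add: sum.If_cases Int_absorb1)
    finally show ?thesis .
  qed
  show ?thesis
  proof (cases "card K = 0")
    case True then show ?thesis unfolding L by (simp add: sum_nonneg)
  next
    case False
    have cs: "(\<Sum>k\<in>K. \<bar>b k\<bar>)^2 \<le> (\<Sum>k\<in>K. (b k)^2) * card K"
      using sum_squared_le_sum_of_squares[of "\<lambda>k. \<bar>b k\<bar>" K] by simp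
    have pos: "sqrt (card K) > 0" using False by simp
    have "(\<Sum>k\<in>K. \<bar>b k\<bar>) \<le> sqrt ((\<Sum>k\<in>K. (b k)^2) * card K)"
      using cs by (simp add: real_le_rsqrt)
    also have "\<dots> = sqrt (\<Sum>k\<in>K. (b k)^2) * sqrt (card K)" by (simp add: real_sqrt_mult)
    finally have "(\<Sum>k\<in>K. \<bar>b k\<bar>) / sqrt (card K) \<le> sqrt (\<Sum>k\<in>K. (b k)^2)"
      using pos by (simp add: divide_le_eq)
    then show ?thesis unfolding L R .
  qed
qed

lemma tangent_isqrt:
  fixes x C :: real assumes x: "x \<ge> 0" and C: "C > 0"
  shows "(1 / sqrt C) * (3/2 - (1 + x) / (2 * C)) \<le> 1 / sqrt (1 + x)"
proof -
  define y where "y = sqrt (1 + x)"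
  define s where "s = sqrt C"
  have y: "y > 0" and s: "s > 0" using x C by (auto simp: y_def s_def)
  have y2: "1 + x = y * y" using x by (simp add: y_def)
  have s2: "C = s * s" using C by (simp add: s_def)
  have key: "0 \<le> (y - s)^2 * (y + 2 * s)" using y s by simp
  have "(1 / s) * (3/2 - (y * y) / (2 * (s * s))) \<le> 1 / y"
  proof -
    have "(1 / s) * (3/2 - (y * y) / (2 * (s * s))) = (3 * s * s * y - y * y * y) / (2 * s * s * s * y)"
      using y s by (simp add: field_simps)
    also have "\<dots> \<le> (2 * s * s * s) / (2 * s * s * s * y)"
      using key y s by (intro divide_right_mono) (auto simp: power2_eq_square algebra_simps)
    also have "\<dots> = 1 / y" using y s by simp
    finally show ?thesis .
  qed
  then show ?thesis unfolding y2 s2 using y s by (simp add: y_def s_def flip: y2 s2)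
qed

lemma (in prob_space) indep_fun_groups:
  fixes Y :: "'i \<Rightarrow> 'a \<Rightarrow> real"
  assumes ind: "indep_vars (\<lambda>_. borel) Y J" and AB: "A \<inter> B = {}" "A \<subseteq> J" "B \<subseteq> J"
    and f: "f \<in> borel_measurable (PiM A (\<lambda>_. borel))" and g: "g \<in> borel_measurable (PiM B (\<lambda>_. borel))"
    and F: "F = (\<lambda>\<omega>. f (restrict (\<lambda>i. Y i \<omega>) A))" and G: "G = (\<lambda>\<omega>. g (restrict (\<lambda>i. Y i \<omega>) B))"
  shows "indep_var borel F borel G"
proof -
  have "indep_var borel (f \<circ> (\<lambda>\<omega>. restrict (\<lambda>i. Y i \<omega>) A)) borel (g \<circ> (\<lambda>\<omega>. restrict (\<lambda>i. Y i \<omega>) B))"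
    by (rule indep_var_compose[OF indep_var_restrict[OF ind AB] f g])
  then show ?thesis unfolding F G comp_def .
qed

lemma num_ineq:
  fixes \<theta> :: real and n :: nat
  assumes n: "n > 0" and th: "2 / real n \<le> \<theta>"
  shows "sqrt (\<theta> / real n) / 8 \<le> \<theta> / (2 * sqrt 3 * sqrt (1 + (real n - 1) * \<theta>))"
proof -
  define N where "N = real n"
  define C where "C = 1 + (N - 1) * \<theta>"
  have N: "N \<ge> 1" using n by (simp add: N_def)
  have thp: "\<theta> > 0" using th n by (smt (verit) N_def divide_pos_pos of_nat_0_less_iff)
  have Nth: "N * \<theta> \<ge> 2" using th N by (simp add: N_def divide_le_eq mult.commute)
  have C: "C > 0" unfolding C_def using N thp by (smt (verit) mult_nonneg_nonneg)
  have key: "12 * C \<le> 64 * N * \<theta>" unfolding C_def using Nth thp by (simp add: algebra_simps)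
  have sq: "\<theta> / (64 * N) \<le> \<theta>^2 / (12 * C)"
  proof -
    have "\<theta> * (12 * C) \<le> \<theta> * (64 * N * \<theta>)" using key thp by (intro mult_left_mono) auto
    then show ?thesis using C N thp by (simp add: field_simps power2_eq_square)
  qed
  have lhs: "(sqrt (\<theta> / N) / 8)^2 = \<theta> / (64 * N)" using thp N by (simp add: power_divide)
  have rhs: "(\<theta> / (2 * sqrt 3 * sqrt C))^2 = \<theta>^2 / (12 * C)" using C by (simp add: power_divide power_mult_distrib)
  have "sqrt (\<theta> / N) / 8 \<le> \<theta> / (2 * sqrt 3 * sqrt C)"
    by (rule power2_le_imp_le) (use sq lhs rhs thp C in auto)
  then show ?thesis unfolding N_def C_def .
qed

theorem lemma2:
  fixes M :: "'a measure" and n p j :: nat and \<theta> \<mu> :: real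
    and chi R :: "nat \<Rightarrow> nat \<Rightarrow> 'a \<Rightarrow> real" and v :: "nat \<Rightarrow> real"
  assumes model: "bernoulli_subgaussian M n p \<theta> chi R"
    and theta_lo: "2 / real n \<le> \<theta>" and theta_hi: "\<theta> \<le> 1"
    and j: "j < p"
    and mu: "\<mu> = integral\<^sup>L M (\<lambda>\<omega>. \<bar>R 0 0 \<omega>\<bar>)"
  shows "integral\<^sup>L M (\<lambda>\<omega>. \<bar>\<Sum>k<n. v k * (chi k j \<omega> * R k j \<omega>)\<bar>)
           \<ge> \<mu> / 8 * sqrt (\<theta> / real n) * (\<Sum>k<n. \<bar>v k\<bar>)"
proof (cases "n = 0")
  case True then show ?thesis by simp
next
  case False
  then have n: "n > 0" by simp
  interpret prob_space M using model by (simp add: bernoulli_subgaussian_def)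
  define Y where "Y = (\<lambda>(b, k, l). if b then chi k l else R k l)"
  define J where "J = (UNIV :: bool set) \<times> {..<n} \<times> {..<p}"
  have ind: "indep_vars (\<lambda>_. borel) Y J"
    using model unfolding bernoulli_subgaussian_def Y_def J_def by simp
  have rvY: "random_variable borel (Y i)" if "i \<in> J" for i
    using ind that unfolding indep_vars_def by auto
  have mc[measurable]: "chi k j \<in> borel_measurable M" if "k < n" for k
    using rvY[of "(True, k, j)"] that j by (simp add: Y_def J_def)
  have mR[measurable]: "R k j \<in> borel_measurable M" if "k < n" for k
    using rvY[of "(False, k, j)"] that j by (simp add: Y_def J_def)
  have c01: "AE \<omega> in M. chi k j \<omega> \<in> {0, 1}" if "k < n" for k
    using model that j by (simp add: bernoulli_subgaussian_def)
  have cth: "measure M {\<omega> \<in> space M. chi k j \<omega> = 1} = \<theta>" if "k < n" for k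
    using model that j by (simp add: bernoulli_subgaussian_def)
  have iR: "integrable M (R k j)" and eR: "expectation (R k j) = 0" if "k < n" for k
    using model that j by (simp_all add: bernoulli_subgaussian_def)
  have eqd: "\<forall>k<n. \<forall>l<p. \<forall>k'<n. \<forall>l'<p. distr M borel (R k l) = distr M borel (R k' l')"
    using model unfolding bernoulli_subgaussian_def by blast
  have m00: "R 0 0 \<in> borel_measurable M" using rvY[of "(False, 0, 0)"] n j by (simp add: Y_def J_def)
  have eaR: "expectation (\<lambda>\<omega>. \<bar>R k j \<omega>\<bar>) = \<mu>" if "k < n" for k
  proof -
    have d: "distr M borel (R k j) = distr M borel (R 0 0)"
      using eqd that j n by blast
    have "(\<integral>x. \<bar>x\<bar> \<partial>distr M borel (R k j)) = expectation (\<lambda>\<omega>. \<bar>R k j \<omega>\<bar>)"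
      by (rule integral_distr) (auto intro: mR that)
    moreover have "(\<integral>x. \<bar>x\<bar> \<partial>distr M borel (R 0 0)) = expectation (\<lambda>\<omega>. \<bar>R 0 0 \<omega>\<bar>)"
      by (rule integral_distr) (auto intro: m00)
    ultimately show ?thesis unfolding mu d by simp
  qed
  have grp: "indep_var borel F borel G"
    if "A \<inter> B = {}" "A \<subseteq> J" "B \<subseteq> J" "f \<in> borel_measurable (PiM A (\<lambda>_. borel))"
       "g \<in> borel_measurable (PiM B (\<lambda>_. borel))"
       "F = (\<lambda>\<omega>. f (restrict (\<lambda>i. Y i \<omega>) A))" "G = (\<lambda>\<omega>. g (restrict (\<lambda>i. Y i \<omega>) B))"
    for A B F G f g
    by (rule indep_fun_groups[OF ind that])
  have iC: "integrable M (chi k j)" if "k < n" for k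
  proof (rule integrable_const_bound[where B=1])
    show "AE x in M. norm (chi k j x) \<le> 1" using c01[OF that] by eventually_elim auto
  qed (simp add: mc that)
  have eC: "expectation (chi k j) = \<theta>" if "k < n" for k
  proof -
    have "expectation (chi k j) = expectation (indicator {\<omega> \<in> space M. chi k j \<omega> = 1})"
      by (rule integral_cong_AE) (use c01[OF that] mc[OF that] in \<open>auto elim!: eventually_mono simp: indicator_def\<close>)
    also have "\<dots> = \<theta>" using cth[OF that] by (simp add: Int_absorb2)
    finally show ?thesis .
  qed
  have indCR: "indep_var borel (chi k j) borel (R k j)" if "k < n" for k
    by (rule indep_fun_groups[OF ind, where A="{(True,k,j)}" and B="{(False,k,j)}" and f="\<lambda>y. y (True,k,j)" and g="\<lambda>y. y (False,k,j)"])
       (use that j in \<open>auto simp: J_def Y_def fun_eq_iff\<close>)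
  define X where "X = (\<lambda>k \<omega>. v k * (chi k j \<omega> * R k j \<omega>))"
  have iX: "integrable M (X k)" if "k < n" for k
    unfolding X_def using indep_var_integrable[OF indCR[OF that] iC[OF that] iR[OF that]] by simp
  have eX: "expectation (X k) = 0" if "k < n" for k
    unfolding X_def using indep_var_lebesgue_integral[OF indCR[OF that] iC[OF that] iR[OF that]] eR[OF that] by simp
  have mX[measurable]: "X k \<in> borel_measurable M" if "k < n" for k using iX[OF that] by auto
  have mf: "(\<lambda>y. \<Sum>k\<in>K. v k * (y (True,k,j) * y (False,k,j))) \<in> borel_measurable (PiM (UNIV \<times> K \<times> {j}) (\<lambda>_. borel))" for K
    by (intro borel_measurable_sum borel_measurable_times borel_measurable_const measurable_component_singleton) auto
  have sgbound: "expectation (\<lambda>\<omega>. \<bar>\<Sum>k<n. if k \<in> A then X k \<omega> else - X k \<omega>\<bar>) \<le> 2 * expectation (\<lambda>\<omega>. \<bar>\<Sum>k<n. X k \<omega>\<bar>)"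
    if A: "A \<subseteq> {..<n}" for A
  proof -
    define SA where "SA = (\<lambda>\<omega>. \<Sum>k\<in>A. X k \<omega>)"
    define SB where "SB = (\<lambda>\<omega>. \<Sum>k\<in>{..<n}-A. X k \<omega>)"
    have finA: "finite A" using A finite_subset by blast
    have iSA: "integrable M SA" unfolding SA_def using A by (intro Bochner_Integration.integrable_sum) (auto intro: iX)
    have iSB: "integrable M SB" unfolding SB_def by (intro Bochner_Integration.integrable_sum) (auto intro: iX)
    have eSA: "expectation SA = 0" unfolding SA_def using A by (subst Bochner_Integration.integral_sum) (auto intro: iX intro!: sum.neutral simp: eX subset_eq)
    have eSB: "expectation SB = 0" unfolding SB_def by (subst Bochner_Integration.integral_sum) (auto intro: iX intro!: sum.neutral simp: eX)
    have eqA: "SA = (\<lambda>\<omega>. (\<lambda>y. \<Sum>k\<in>A. v k * (y (True,k,j) * y (False,k,j))) (restrict (\<lambda>i. Y i \<omega>) (UNIV \<times> A \<times> {j})))"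
      unfolding SA_def X_def Y_def by (auto intro!: sum.cong)
    have eqB: "SB = (\<lambda>\<omega>. (\<lambda>y. \<Sum>k\<in>{..<n}-A. v k * (y (True,k,j) * y (False,k,j))) (restrict (\<lambda>i. Y i \<omega>) (UNIV \<times> ({..<n}-A) \<times> {j})))"
      unfolding SB_def X_def Y_def by (auto intro!: sum.cong)
    have sub: "UNIV \<times> A \<times> {j} \<subseteq> J" "UNIV \<times> ({..<n}-A) \<times> {j} \<subseteq> J" using A j by (auto simp: J_def)
    have disj: "(UNIV \<times> A \<times> {j}) \<inter> (UNIV \<times> ({..<n}-A) \<times> {j}) = {}" by auto
    have ind1: "indep_var borel SA borel SB"
      by (rule indep_fun_groups[OF ind disj sub mf mf eqA eqB])
    have ind2: "indep_var borel SB borel SA"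
      by (rule indep_fun_groups[OF ind _ sub(2) sub(1) mf mf eqB eqA]) auto
    have S: "(\<lambda>\<omega>. \<Sum>k<n. X k \<omega>) = (\<lambda>\<omega>. SA \<omega> + SB \<omega>)"
      unfolding SA_def SB_def using A by (auto simp: fun_eq_iff sum.subset_diff[of A "{..<n}"])
    have sg: "(\<lambda>\<omega>. \<Sum>k<n. if k \<in> A then X k \<omega> else - X k \<omega>) = (\<lambda>\<omega>. SA \<omega> - SB \<omega>)"
    proof
      fix \<omega>
      have "(\<Sum>k<n. if k \<in> A then X k \<omega> else - X k \<omega>) = (\<Sum>k\<in>{..<n} \<inter> {k. k \<in> A}. X k \<omega>) + (\<Sum>k\<in>{..<n} \<inter> - {k. k \<in> A}. - X k \<omega>)"
        by (rule sum.If_cases) simp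
      moreover have "{..<n} \<inter> {k. k \<in> A} = A" "{..<n} \<inter> - {k. k \<in> A} = {..<n} - A" using A by auto
      ultimately show "(\<Sum>k<n. if k \<in> A then X k \<omega> else - X k \<omega>) = SA \<omega> - SB \<omega>"
        unfolding SA_def SB_def by (simp add: sum_negf)
    qed
    have "expectation (\<lambda>\<omega>. \<bar>SA \<omega> - SB \<omega>\<bar>) \<le> expectation (\<lambda>\<omega>. \<bar>SA \<omega>\<bar> + \<bar>SB \<omega>\<bar>)"
      by (rule integral_mono) (use iSA iSB in auto)
    also have "\<dots> = expectation (\<lambda>\<omega>. \<bar>SA \<omega>\<bar>) + expectation (\<lambda>\<omega>. \<bar>SB \<omega>\<bar>)"
      by (rule Bochner_Integration.integral_add) (use iSA iSB in auto)
    also have "\<dots> \<le> expectation (\<lambda>\<omega>. \<bar>SA \<omega> + SB \<omega>\<bar>) + expectation (\<lambda>\<omega>. \<bar>SB \<omega> + SA \<omega>\<bar>)"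
      by (intro add_mono abs_indep_mono ind1 ind2 iSA iSB eSA eSB)
    also have "\<dots> = 2 * expectation (\<lambda>\<omega>. \<bar>SA \<omega> + SB \<omega>\<bar>)" by (simp add: add.commute)
    finally have fin: "expectation (\<lambda>\<omega>. \<bar>SA \<omega> - SB \<omega>\<bar>) \<le> 2 * expectation (\<lambda>\<omega>. \<bar>SA \<omega> + SB \<omega>\<bar>)" .
    have sg': "\<And>\<omega>. (\<Sum>k<n. if k \<in> A then X k \<omega> else - X k \<omega>) = SA \<omega> - SB \<omega>" using sg by metis
    have S': "\<And>\<omega>. (\<Sum>k<n. X k \<omega>) = SA \<omega> + SB \<omega>" using S by metis
    show ?thesis by (simp only: sg' S' fin)
  qed
  define D where "D = (\<lambda>k \<omega>. 1 + (\<Sum>l\<in>{..<n}-{k}. chi l j \<omega>))"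
  define H where "H = (\<lambda>k \<omega>. 1 / sqrt (D k \<omega>))"
  define G where "G = (\<lambda>k \<omega>. chi k j \<omega> * H k \<omega>)"
  have allc: "AE \<omega> in M. \<forall>k<n. chi k j \<omega> \<in> {0,1}"
  proof -
    have "AE \<omega> in M. \<forall>k\<in>{..<n}. chi k j \<omega> \<in> {0,1}" by (rule eventually_ball_finite) (use c01 in simp_all)
    then show ?thesis by eventually_elim auto
  qed
  have mD: "D k \<in> borel_measurable M" for k
    unfolding D_def by (intro borel_measurable_add borel_measurable_const borel_measurable_sum mc) auto
  have mH: "H k \<in> borel_measurable M" for k
    unfolding H_def by (intro borel_measurable_divide borel_measurable_const measurable_compose[OF mD borel_measurable_sqrt])
  have Dge: "AE \<omega> in M. D k \<omega> \<ge> 1" for k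
    using allc by eventually_elim (auto simp: D_def intro!: sum_nonneg)
  have iH: "integrable M (H k)" for k
  proof (rule integrable_const_bound[where B=1])
    show "AE x in M. norm (H k x) \<le> 1" using Dge[of k] by eventually_elim (auto simp: H_def)
  qed (rule mH)
  define C where "C = 1 + (real n - 1) * \<theta>"
  have th0: "\<theta> \<ge> 0" using theta_lo by (smt (verit) divide_nonneg_nonneg of_nat_0_le_iff)
  have Cpos: "C > 0" unfolding C_def using n th0 by (simp add: add_pos_nonneg)
  have iD: "integrable M (D k)" if "k < n" for k
    unfolding D_def by (intro Bochner_Integration.integrable_add integrable_const Bochner_Integration.integrable_sum iC) auto
  have eD: "expectation (D k) = C" if "k < n" for k
  proof -
    have "expectation (D k) = 1 + (\<Sum>l\<in>{..<n}-{k}. expectation (chi l j))"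
      unfolding D_def by (subst Bochner_Integration.integral_add) (auto intro!: Bochner_Integration.integrable_sum iC Bochner_Integration.integral_sum simp: prob_space)
    also have "\<dots> = 1 + (\<Sum>l\<in>{..<n}-{k}. \<theta>)" by (rule arg_cong[where f="\<lambda>x. 1 + x"], rule sum.cong) (auto intro: eC)
    also have "\<dots> = C" using that by (simp add: C_def)
    finally show ?thesis .
  qed
  have eH: "expectation (H k) \<ge> 1 / sqrt C" if "k < n" for k
  proof -
    have "expectation (\<lambda>\<omega>. (1 / sqrt C) * (3/2 - D k \<omega> / (2 * C))) \<le> expectation (H k)"
    proof (rule integral_mono_AE)
      show "integrable M (\<lambda>\<omega>. (1 / sqrt C) * (3/2 - D k \<omega> / (2 * C)))"
        using iD[OF that] by auto
      show "integrable M (H k)" by (rule iH)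
      show "AE \<omega> in M. 1 / sqrt C * (3 / 2 - D k \<omega> / (2 * C)) \<le> H k \<omega>"
        using allc
      proof eventually_elim
        case (elim \<omega>)
        have x: "(\<Sum>l\<in>{..<n}-{k}. chi l j \<omega>) \<ge> 0" using elim by (auto intro!: sum_nonneg)
        show ?case using tangent_isqrt[OF x Cpos] unfolding H_def D_def by simp
      qed
    qed
    also have "expectation (\<lambda>\<omega>. (1 / sqrt C) * (3/2 - D k \<omega> / (2 * C))) = (1 / sqrt C) * (3/2 - C / (2 * C))"
      using iD[OF that] eD[OF that] by (simp add: prob_space)
    also have "(1 / sqrt C) * (3/2 - C / (2 * C)) = 1 / sqrt C" using Cpos by simp
    finally show ?thesis .
  qed
  have mg: "(\<lambda>y. 1 / sqrt (1 + (\<Sum>l\<in>{..<n}-{k}. y (True,l,j)))) \<in> borel_measurable (PiM ({True} \<times> ({..<n}-{k}) \<times> {j}) (\<lambda>_. borel))" for k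
    by (intro borel_measurable_divide borel_measurable_const measurable_compose[OF _ borel_measurable_sqrt]
          borel_measurable_add borel_measurable_sum measurable_component_singleton) auto
  have indCH: "indep_var borel (chi k j) borel (H k)" if "k < n" for k
    by (rule indep_fun_groups[OF ind _ _ _ _ mg[of k], where A="{(True,k,j)}" and f="\<lambda>y. y (True,k,j)"])
       (use that j in \<open>auto simp: J_def Y_def H_def D_def fun_eq_iff intro!: sum.cong arg_cong[where f=sqrt]\<close>)
  have eG: "expectation (G k) \<ge> \<theta> / sqrt C" if "k < n" for k
  proof -
    have "expectation (G k) = \<theta> * expectation (H k)"
      unfolding G_def using indep_var_lebesgue_integral[OF indCH[OF that] iC[OF that] iH] eC[OF that] by simp
    then show ?thesis using eH[OF that] th0 by (simp add: mult_left_mono divide_inverse)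
  qed
  have iG: "integrable M (G k)" if "k < n" for k
    unfolding G_def by (rule indep_var_integrable[OF indCH[OF that] iC[OF that] iH])
  have mg2: "(\<lambda>y. y (True,k,j) * (1 / sqrt (1 + (\<Sum>l\<in>{..<n}-{k}. y (True,l,j))))) \<in> borel_measurable (PiM ({True} \<times> {..<n} \<times> {j}) (\<lambda>_. borel))" if "k < n" for k
    using that by (intro borel_measurable_times borel_measurable_divide borel_measurable_const measurable_compose[OF _ borel_measurable_sqrt]
          borel_measurable_add borel_measurable_sum measurable_component_singleton) auto
  have indRG: "indep_var borel (\<lambda>\<omega>. \<bar>R k j \<omega>\<bar>) borel (G k)" if "k < n" for k
    by (rule indep_fun_groups[OF ind _ _ _ _ mg2[OF that], where A="{(False,k,j)}" and f="\<lambda>y. \<bar>y (False,k,j)\<bar>"])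
       (use that j in \<open>auto simp: J_def Y_def G_def H_def D_def fun_eq_iff intro!: sum.cong arg_cong[where f=sqrt]\<close>)
  have eRG: "expectation (\<lambda>\<omega>. \<bar>R k j \<omega>\<bar> * G k \<omega>) \<ge> \<mu> * \<theta> / sqrt C" if "k < n" for k
  proof -
    have "expectation (\<lambda>\<omega>. \<bar>R k j \<omega>\<bar> * G k \<omega>) = \<mu> * expectation (G k)"
      using indep_var_lebesgue_integral[OF indRG[OF that] _ iG[OF that]] iR[OF that] eaR[OF that] by simp
    moreover have "\<mu> \<ge> 0" unfolding mu by (rule Bochner_Integration.integral_nonneg) simp
    ultimately show ?thesis using eG[OF that] mult_left_mono[of "\<theta> / sqrt C" "expectation (G k)" \<mu>] by simp
  qed
  have iRG: "integrable M (\<lambda>\<omega>. \<bar>R k j \<omega>\<bar> * G k \<omega>)" if "k < n" for k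
    using indep_var_integrable[OF indRG[OF that] _ iG[OF that]] iR[OF that] by simp
  define T where "T = (\<lambda>\<omega>. \<Sum>A\<in>Pow {..<n}. \<bar>sgs (\<lambda>k. X k \<omega>) n A\<bar>)"
  have isg: "integrable M (\<lambda>\<omega>. \<bar>sgs (\<lambda>k. X k \<omega>) n A\<bar>)" for A
    unfolding sgs_def
  proof (intro integrable_abs Bochner_Integration.integrable_sum)
    fix k assume "k \<in> {..<n}"
    then show "integrable M (\<lambda>x. if k \<in> A then X k x else - X k x)" by (cases "k \<in> A") (auto intro: iX)
  qed
  have up: "expectation T \<le> 2^n * (2 * expectation (\<lambda>\<omega>. \<bar>\<Sum>k<n. X k \<omega>\<bar>))"
  proof -
    have "expectation T = (\<Sum>A\<in>Pow {..<n}. expectation (\<lambda>\<omega>. \<bar>sgs (\<lambda>k. X k \<omega>) n A\<bar>))"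
      unfolding T_def by (rule Bochner_Integration.integral_sum) (rule isg)
    also have "\<dots> \<le> (\<Sum>A\<in>Pow {..<n}. 2 * expectation (\<lambda>\<omega>. \<bar>\<Sum>k<n. X k \<omega>\<bar>))"
      by (rule sum_mono) (auto simp: sgs_def intro: sgbound)
    also have "\<dots> = 2^n * (2 * expectation (\<lambda>\<omega>. \<bar>\<Sum>k<n. X k \<omega>\<bar>))" by (simp add: card_Pow)
    finally show ?thesis .
  qed
  have lowAE: "AE \<omega> in M. 2^n / sqrt 3 * (\<Sum>k<n. \<bar>v k\<bar> * (\<bar>R k j \<omega>\<bar> * G k \<omega>)) \<le> T \<omega>"
    using allc
  proof eventually_elim
    case (elim \<omega>)
    have cs: "(\<Sum>k<n. \<bar>v k * R k j \<omega>\<bar> * chi k j \<omega> / sqrt (1 + (\<Sum>l\<in>{..<n}-{k}. chi l j \<omega>))) \<le> sqrt (\<Sum>k<n. (v k * R k j \<omega> * chi k j \<omega>)^2)"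
      by (rule cs_chi) (use elim in auto)
    have e1: "(\<Sum>k<n. \<bar>v k\<bar> * (\<bar>R k j \<omega>\<bar> * G k \<omega>)) = (\<Sum>k<n. \<bar>v k * R k j \<omega>\<bar> * chi k j \<omega> / sqrt (1 + (\<Sum>l\<in>{..<n}-{k}. chi l j \<omega>)))"
      by (rule sum.cong) (auto simp: G_def H_def D_def abs_mult)
    have e2: "(\<Sum>k<n. (v k * R k j \<omega> * chi k j \<omega>)^2) = (\<Sum>k<n. (X k \<omega>)^2)"
      by (rule sum.cong) (auto simp: X_def ac_simps)
    have "2^n / sqrt 3 * (\<Sum>k<n. \<bar>v k\<bar> * (\<bar>R k j \<omega>\<bar> * G k \<omega>)) \<le> 2^n / sqrt 3 * sqrt (\<Sum>k<n. (X k \<omega>)^2)"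
      using cs unfolding e1 e2 by (intro mult_left_mono) auto
    also have "\<dots> \<le> T \<omega>" using khintchine[of n "\<lambda>k. X k \<omega>"] unfolding T_def by simp
    finally show ?case .
  qed
  have low: "2^n / sqrt 3 * (\<Sum>k<n. \<bar>v k\<bar> * (\<mu> * \<theta> / sqrt C)) \<le> expectation T"
  proof -
    have "2^n / sqrt 3 * (\<Sum>k<n. \<bar>v k\<bar> * (\<mu> * \<theta> / sqrt C)) \<le> 2^n / sqrt 3 * (\<Sum>k<n. \<bar>v k\<bar> * expectation (\<lambda>\<omega>. \<bar>R k j \<omega>\<bar> * G k \<omega>))"
      by (intro mult_left_mono sum_mono) (auto intro: eRG)
    also have "\<dots> = expectation (\<lambda>\<omega>. 2^n / sqrt 3 * (\<Sum>k<n. \<bar>v k\<bar> * (\<bar>R k j \<omega>\<bar> * G k \<omega>)))"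
      by (subst Bochner_Integration.integral_mult_right_zero, subst Bochner_Integration.integral_sum)
         (auto intro!: iRG)
    also have "\<dots> \<le> expectation T"
    proof (rule integral_mono_AE[OF _ _ lowAE])
      show "integrable M (\<lambda>\<omega>. 2^n / sqrt 3 * (\<Sum>k<n. \<bar>v k\<bar> * (\<bar>R k j \<omega>\<bar> * G k \<omega>)))"
        by (intro integrable_mult_right Bochner_Integration.integrable_sum) (auto intro: iRG)
      show "integrable M T" unfolding T_def by (intro Bochner_Integration.integrable_sum isg)
    qed
    finally show ?thesis .
  qed
  define L where "L = (\<Sum>k<n. \<bar>v k\<bar>)"
  define E where "E = expectation (\<lambda>\<omega>. \<bar>\<Sum>k<n. X k \<omega>\<bar>)"
  have Lnn: "L \<ge> 0" unfolding L_def by (simp add: sum_nonneg)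
  have munn: "\<mu> \<ge> 0" unfolding mu by (rule Bochner_Integration.integral_nonneg) simp
  have Efin: "2^n / sqrt 3 * (L * (\<mu> * \<theta> / sqrt C)) \<le> 2^n * (2 * E)"
  proof -
    have eqs: "(\<Sum>k<n. \<bar>v k\<bar> * (\<mu> * \<theta> / sqrt C)) = L * (\<mu> * \<theta> / sqrt C)"
      unfolding L_def by (rule sum_distrib_right[symmetric])
    show ?thesis using order_trans[OF low up] unfolding eqs E_def .
  qed
  have LE: "L * (\<mu> * \<theta> / sqrt C) / (2 * sqrt 3) \<le> E"
  proof -
    have "2^n * (2 * (L * (\<mu> * \<theta> / sqrt C) / (2 * sqrt 3))) \<le> 2^n * (2 * E)"
      using Efin by (simp add: field_simps)
    then have "2 * (L * (\<mu> * \<theta> / sqrt C) / (2 * sqrt 3)) \<le> 2 * E" by (rule mult_left_le_imp_le) simp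
    then show ?thesis by linarith
  qed
  have num: "sqrt (\<theta> / real n) / 8 \<le> \<theta> / (2 * sqrt 3 * sqrt C)"
    unfolding C_def by (rule num_ineq[OF n theta_lo])
  have "\<mu> / 8 * sqrt (\<theta> / real n) * L = (\<mu> * L) * (sqrt (\<theta> / real n) / 8)" by simp
  also have "\<dots> \<le> (\<mu> * L) * (\<theta> / (2 * sqrt 3 * sqrt C))"
    using num munn Lnn by (intro mult_left_mono) auto
  also have "\<dots> = L * (\<mu> * \<theta> / sqrt C) / (2 * sqrt 3)" by (simp add: ac_simps)
  also have "\<dots> \<le> E" by (rule LE)
  finally show ?thesis unfolding E_def L_def X_def .
qed

end
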